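(* Let $R$ be a commutative Noetherian ring with unity such that $\Gamma_E(R)$ is finite and has more than two vertices. Then $\Gamma_E(R)$ is not a regular graph.
   Context: For $x,y\in R$ write $x\sim y$ iff $\operatorname{ann}(x)=\operatorname{ann}(y)$; $[x]$ denotes the equivalence class of $x$. Let $Z^*(R)$ be the set of nonzero zero divisors of $R$. The graph $\Gamma_E(R)$ is the simple graph whose vertices are the classes $[x]$ with $x\in Z^*(R)$, two distinct vertices $[x],[y]$ being adjacent iff $xy=0$. A graph is regular if all its vertices have the same degree. *)

theory Defs
  imports Main
begin

definition is_ideal :: "'a::comm_ring_1 set \<Rightarrow> bool" where
  "is_ideal I \<longleftrightarrow> 0 \<in> I \<and> (\<forall>x\<in>I. \<forall>y\<in>I. x + y \<in> I) \<and> (\<forall>x\<in>I. - x \<in> I)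
     \<and> (\<forall>r x. x \<in> I \<longrightarrow> r * x \<in> I)"

definition noetherian_ring :: "'a::comm_ring_1 itself \<Rightarrow> bool" where
  "noetherian_ring (t::'a itself) \<longleftrightarrow>
     (\<forall>I :: nat \<Rightarrow> 'a set. (\<forall>n. is_ideal (I n)) \<and> (\<forall>n. I n \<subseteq> I (Suc n))
        \<longrightarrow> (\<exists>N. \<forall>n\<ge>N. I n = I N))"

definition ann :: "'a::comm_ring_1 \<Rightarrow> 'a set" where
  "ann x = {y. x * y = 0}"

definition zdiv_star :: "'a::comm_ring_1 set" where
  "zdiv_star = {x. x \<noteq> 0 \<and> (\<exists>y. y \<noteq> 0 \<and> x * y = 0)}"

definition eclass :: "'a::comm_ring_1 \<Rightarrow> 'a set" where
  "eclass x = {y. ann y = ann x}"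

definition GE_vertices :: "'a::comm_ring_1 set set" where
  "GE_vertices = eclass ` zdiv_star"

definition GE_adj :: "'a::comm_ring_1 set \<Rightarrow> 'a set \<Rightarrow> bool" where
  "GE_adj v w \<longleftrightarrow> v \<in> GE_vertices \<and> w \<in> GE_vertices \<and> v \<noteq> w \<and>
     (\<exists>x y. x \<in> zdiv_star \<and> y \<in> zdiv_star \<and> v = eclass x \<and> w = eclass y \<and> x * y = 0)"

definition GE_degree :: "'a::comm_ring_1 set \<Rightarrow> nat" where
  "GE_degree v = card {w \<in> GE_vertices. GE_adj v w}"

definition GE_regular :: "'a::comm_ring_1 itself \<Rightarrow> bool" where
  "GE_regular (t::'a itself) \<longleftrightarrow> (\<forall>v \<in> (GE_vertices :: 'a set set). \<forall>w \<in> (GE_vertices :: 'a set set). GE_degree v = GE_degree w)"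

end

theory Submission
  imports Defs
begin

lemma ann_mem: "y \<in> ann x \<longleftrightarrow> x * y = 0"
  by (simp add: ann_def)

lemma zds: "x \<in> zdiv_star \<longleftrightarrow> x \<noteq> 0 \<and> (\<exists>y. y \<noteq> 0 \<and> x * y = 0)"
  by (simp add: zdiv_star_def)

lemma eclass_eq: "eclass a = eclass b \<longleftrightarrow> ann a = ann b"
  unfolding eclass_def by auto

lemma adj_iff:
  assumes "a \<in> zdiv_star" "b \<in> zdiv_star"
  shows "GE_adj (eclass a) (eclass b) \<longleftrightarrow> eclass a \<noteq> eclass b \<and> a * b = 0"
proof
  assume "GE_adj (eclass a) (eclass b)"
  then obtain x y where xy: "eclass a = eclass x" "eclass b = eclass y" "x * y = 0"
    and ne: "eclass a \<noteq> eclass b"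
    unfolding GE_adj_def by blast
  have "ann a = ann x" "ann b = ann y" using xy eclass_eq by blast+
  then have "a * y = 0" using xy(3) by (metis ann_mem)
  then have "b * a = 0" using \<open>ann b = ann y\<close> by (metis ann_mem mult.commute)
  then show "eclass a \<noteq> eclass b \<and> a * b = 0" using ne by (simp add: mult.commute)
next
  assume "eclass a \<noteq> eclass b \<and> a * b = 0"
  then show "GE_adj (eclass a) (eclass b)"
    unfolding GE_adj_def GE_vertices_def using assms by blast
qed

lemma ann_finite:
  assumes "finite (GE_vertices :: 'a::comm_ring_1 set set)"
  shows "finite (ann ` (zdiv_star :: 'a set))"
proof -
  define g :: "'a set \<Rightarrow> 'a set" where "g v = {y. \<forall>w\<in>v. w * y = 0}" for v
  have "ann a = g (eclass a)" for a :: 'a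
    unfolding g_def eclass_def ann_def by auto
  then have "ann ` (zdiv_star :: 'a set) = g ` GE_vertices"
    unfolding GE_vertices_def by (auto simp: image_image)
  then show ?thesis using assms by simp
qed

lemma three_elems:
  assumes "card A > 2"
  shows "\<exists>a b c. a \<in> A \<and> b \<in> A \<and> c \<in> A \<and> a \<noteq> b \<and> a \<noteq> c \<and> b \<noteq> c"
proof -
  have "finite A" using assms card.infinite by fastforce
  obtain a where a: "a \<in> A" using assms by fastforce
  have "card (A - {a}) > 1" using assms a \<open>finite A\<close> by simp
  then obtain b where b: "b \<in> A - {a}" by (metis card.empty ex_in_conv not_less0 less_trans zero_less_one)
  have "card (A - {a} - {b}) > 0" using \<open>card (A - {a}) > 1\<close> b \<open>finite A\<close> by simp
  then obtain c where c: "c \<in> A - {a} - {b}" by (metis card_gt_0_iff ex_in_conv)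
  show ?thesis using a b c by blast
qed

theorem proposition1p10:
  assumes "noetherian_ring TYPE('a::comm_ring_1)"
    and "finite (GE_vertices :: 'a set set)"
    and "card (GE_vertices :: 'a set set) > 2"
  shows "\<not> GE_regular TYPE('a)"
proof
  assume reg: "GE_regular TYPE('a)"
  let ?V = "GE_vertices :: 'a set set"
  let ?Z = "zdiv_star :: 'a set"
  define N where "N v = {w \<in> ?V. GE_adj v w}" for v
  have deg: "card (N v) = card (N w)" if "v \<in> ?V" "w \<in> ?V" for v w
    using reg that unfolding GE_regular_def GE_degree_def N_def by blast
  have NV: "N v \<subseteq> ?V - {v}" for v unfolding N_def GE_adj_def by auto
  have Zne: "?Z \<noteq> {}" using assms(3) unfolding GE_vertices_def by auto
  have fin: "finite (ann ` ?Z)" using ann_finite assms(2) by blast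
  obtain x where x: "x \<in> ?Z" and xmax: "\<And>a. a \<in> ?Z \<Longrightarrow> ann x \<subseteq> ann a \<Longrightarrow> ann a = ann x"
  proof -
    have "ann ` ?Z \<noteq> {}" using Zne by blast
    from finite_has_maximal[OF fin this] obtain m where m: "m \<in> ann ` ?Z"
      "\<forall>b \<in> ann ` ?Z. m \<subseteq> b \<longrightarrow> m = b" by blast
    then obtain x0 where "x0 \<in> ?Z" "m = ann x0" by blast
    then show ?thesis using that m(2) by blast
  qed
  define P where "P = ann x"
  have Pm: "p \<in> P \<longleftrightarrow> x * p = 0" for p unfolding P_def ann_mem ..
  have x0: "x \<noteq> 0" using x zds by blast
  have inZ: "p \<in> ?Z" if "p \<noteq> 0" "q \<noteq> 0" "q * p = 0" for p q
  proof -
    have "p * q = 0" using that(3) by (simp add: mult.commute)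
    then show ?thesis using that(1,2) unfolding zds by blast
  qed
  have prime: "b \<in> P" if "a * b \<in> P" "a \<notin> P" for a b
  proof -
    have ax: "a * x \<noteq> 0" using that(2) Pm by (simp add: mult.commute)
    obtain y where y: "y \<noteq> 0" "x * y = 0" using x zds by blast
    have "a * x * y = 0" using y by (simp add: mult.assoc)
    then have "a * x \<in> ?Z" using ax y(1) unfolding zds by blast
    moreover have "ann x \<subseteq> ann (a * x)" by (auto simp: ann_mem mult.assoc mult.left_commute)
    ultimately have "ann (a * x) = ann x" using xmax by blast
    moreover have "a * x * b = 0" using that(1) Pm by (simp add: mult.commute mult.left_commute)
    ultimately show ?thesis unfolding P_def by (metis ann_mem)
  qed
  have ideal: "p + q \<in> P" if "p \<in> P" "q \<in> P" for p q
    using that Pm by (simp add: distrib_left)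
  show False
  proof (cases "\<exists>z \<in> ?Z. z \<notin> P \<and> ann z \<noteq> P")
    case True
    then obtain z where z: "z \<in> ?Z" "z \<notin> P" "ann z \<noteq> P" by blast
    have annzP: "ann z \<subseteq> P"
    proof
      fix w assume "w \<in> ann z"
      then have "z * w \<in> P" using Pm by (simp add: ann_mem)
      then show "w \<in> P" using prime z(2) by blast
    qed
    have sub: "N (eclass z) \<subseteq> N (eclass x)"
    proof
      fix w assume w: "w \<in> N (eclass z)"
      then obtain b where b: "b \<in> ?Z" "w = eclass b" unfolding N_def GE_vertices_def by blast
      have "GE_adj (eclass z) (eclass b)" using w b N_def by simp
      then have zb: "z * b = 0" using adj_iff z(1) b(1) by blast
      then have bP: "b \<in> P" using annzP by (auto simp: ann_mem)
      have "eclass x \<noteq> eclass b"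
      proof
        assume "eclass x = eclass b"
        then have "ann b = P" using eclass_eq P_def by metis
        then show False using zb z(2) by (metis ann_mem mult.commute)
      qed
      then have "GE_adj (eclass x) (eclass b)" using adj_iff x b(1) bP Pm by blast
      then show "w \<in> N (eclass x)" using w b N_def by simp
    qed
    obtain p where p: "p \<in> P" "p \<notin> ann z" using annzP z(3) by blast
    show False
    proof (cases "\<exists>p. p \<in> P \<and> p \<notin> ann z \<and> ann p \<noteq> P")
      case True
      then obtain p where p: "p \<in> P" "p \<notin> ann z" "ann p \<noteq> P" by blast
      have p0: "p \<noteq> 0" using p(2) by (auto simp: ann_mem)
      have pZ: "p \<in> ?Z" using inZ[OF p0 x0] p(1) Pm by blast
      have "eclass x \<noteq> eclass p" using p(3) eclass_eq P_def by metis
      have xp: "x * p = 0" using p(1) Pm by blast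
      have "GE_adj (eclass x) (eclass p)"
        using adj_iff[OF x pZ] xp \<open>eclass x \<noteq> eclass p\<close> by blast
      moreover have "eclass p \<in> ?V" using pZ unfolding GE_vertices_def by blast
      ultimately have in1: "eclass p \<in> N (eclass x)" unfolding N_def by blast
      have in2: "eclass p \<notin> N (eclass z)"
      proof
        assume "eclass p \<in> N (eclass z)"
        then have "GE_adj (eclass z) (eclass p)" unfolding N_def by blast
        then have "z * p = 0" using adj_iff[OF z(1) pZ] by blast
        then show False using p(2) by (simp add: ann_mem)
      qed
      have "N (eclass z) \<subset> N (eclass x)" using sub in1 in2 by blast
      moreover have "finite (N (eclass x))"
        using NV[of "eclass x"] assms(2) finite_subset by blast
      ultimately have "card (N (eclass z)) < card (N (eclass x))" by (rule psubset_card_mono[rotated])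
      moreover have "eclass z \<in> ?V" "eclass x \<in> ?V" using z(1) x unfolding GE_vertices_def by blast+
      ultimately show False using deg[of "eclass z" "eclass x"] by linarith
    next
      case False
      then have allP: "\<And>q. q \<in> P \<Longrightarrow> q \<notin> ann z \<Longrightarrow> ann q = P" by blast
      obtain w where w: "w \<noteq> 0" "z * w = 0" using z(1) zds by blast
      have wz: "w \<in> ann z" using w by (simp add: ann_mem)
      have wP: "w \<in> P" using wz annzP by blast
      have "p + w \<notin> ann z"
        using p(2) wz by (auto simp: ann_mem distrib_left)
      then have ann_pw: "ann (p + w) = P" using allP ideal p(1) wP by blast
      have annp: "ann p = P" using allP p by blast
      have "P \<subseteq> ann w"
      proof
        fix q assume q: "q \<in> P"
        have "(p + w) * q = 0" using ann_pw q by (metis ann_mem)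
        moreover have "p * q = 0" using annp q by (metis ann_mem)
        ultimately show "q \<in> ann w" by (simp add: ann_mem distrib_right)
      qed
      moreover have "z \<noteq> 0" using z(1) unfolding zds by blast
      then have "w \<in> ?Z" using inZ[OF w(1)] w(2) by blast
      ultimately have "ann w = P" using xmax P_def by blast
      then have "z \<in> P" using w(2) by (metis ann_mem mult.commute)
      then show False using z(2) by blast
    qed
  next
    case False
    then have inP: "\<And>z. z \<in> ?Z \<Longrightarrow> ann z \<noteq> P \<Longrightarrow> z \<in> P" by blast
    have finV: "finite ?V" using assms(2) .
    have Nx: "N (eclass x) = ?V - {eclass x}"
    proof
      show "N (eclass x) \<subseteq> ?V - {eclass x}" using NV .
      show "?V - {eclass x} \<subseteq> N (eclass x)"
      proof
        fix v assume v: "v \<in> ?V - {eclass x}"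
        then obtain b where b: "b \<in> ?Z" "v = eclass b" unfolding GE_vertices_def by blast
        have "eclass b \<noteq> eclass x" using v b by blast
        then have "ann b \<noteq> P" unfolding P_def eclass_eq .
        then have "b \<in> P" using inP b(1) by blast
        then have "x * b = 0" using Pm by blast
        then have "GE_adj (eclass x) (eclass b)" using adj_iff[OF x b(1)] \<open>eclass b \<noteq> eclass x\<close> by auto
        then show "v \<in> N (eclass x)" using v b unfolding N_def by blast
      qed
    qed
    have complete: "a * b = 0" if "a \<in> ?Z" "b \<in> ?Z" "ann a \<noteq> ann b" for a b
    proof -
      have av: "eclass a \<in> ?V" using that unfolding GE_vertices_def by auto
      have xv: "eclass x \<in> ?V" using x unfolding GE_vertices_def by auto
      have "card (N (eclass a)) = card (?V - {eclass x})" using deg[OF av xv] Nx by simp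
      also have "\<dots> = card (?V - {eclass a})" using av xv finV by (simp add: card_Diff_singleton)
      finally have ceq: "card (N (eclass a)) = card (?V - {eclass a})" .
      have "N (eclass a) = ?V - {eclass a}"
        by (rule card_subset_eq[OF _ NV ceq]) (use finV in blast)
      moreover have "eclass b \<noteq> eclass a" using that(3) unfolding eclass_eq by blast
      moreover have "eclass b \<in> ?V" using that(2) unfolding GE_vertices_def by blast
      ultimately have "GE_adj (eclass a) (eclass b)" unfolding N_def by blast
      then show ?thesis using adj_iff[OF that(1,2)] by blast
    qed
    have C1: "ann a = ann b" if "a \<in> ?Z" "b \<in> ?Z" "a * a = 0" "b * b = 0" for a b
    proof (rule ccontr)
      assume ne: "ann a \<noteq> ann b"
      have key: "c \<in> ann e" if "e \<in> ?Z" "e * e = 0" "c \<in> ann d" "d \<in> ?Z" for c d e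
      proof (cases "c = 0")
        case True then show ?thesis by (simp add: ann_mem)
      next
        case False
        have d0: "d \<noteq> 0" using that(4) zds by blast
        have cZ: "c \<in> ?Z" using inZ[OF False d0] that(3) by (simp add: ann_mem)
        show ?thesis
        proof (cases "ann c = ann e")
          case True then show ?thesis using that(2) by (metis ann_mem mult.commute)
        next
          case False then show ?thesis using complete[OF that(1) cZ] by (simp add: ann_mem)
        qed
      qed
      have "ann a \<subseteq> ann b" using key[OF that(2) that(4) _ that(1)] by blast
      moreover have "ann b \<subseteq> ann a" using key[OF that(1) that(3) _ that(2)] by blast
      ultimately show False using ne by blast
    qed
    have C2: "w * w = 0" if "y \<in> ?Z" "w \<in> ?Z" "u \<in> ?Z" "y * y \<noteq> 0"
      "ann y \<noteq> ann w" "ann y \<noteq> ann u" "ann w \<noteq> ann u" for y w u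
    proof -
      have yw: "y * w = 0" using complete[OF that(1,2,5)] .
      have yu: "y * u = 0" using complete[OF that(1,3,6)] .
      have wu: "w * u = 0" using complete[OF that(2,3,7)] .
      have "y + w \<noteq> 0"
      proof
        assume "y + w = 0"
        then have "w = - y" by (simp add: add_eq_0_iff)
        then have "ann w = ann y" by (auto simp: ann_mem)
        then show False using that(5) by simp
      qed
      moreover have u0: "u \<noteq> 0" using that(3) unfolding zds by blast
      moreover have "u * (y + w) = 0" using yu wu by (simp add: distrib_left mult.commute)
      ultimately have ywZ: "y + w \<in> ?Z" using inZ by blast
      have "y * (y + w) \<noteq> 0" using yw that(4) by (simp add: distrib_left)
      then have "ann (y + w) = ann y" using complete[OF that(1) ywZ] by blast
      then have "(y + w) * w = 0" using yw by (metis ann_mem)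
      then show ?thesis using yw by (simp add: distrib_right)
    qed
    obtain v1 v2 v3 where vs: "v1 \<in> ?V" "v2 \<in> ?V" "v3 \<in> ?V" "v1 \<noteq> v2" "v1 \<noteq> v3" "v2 \<noteq> v3"
      using three_elems[OF assms(3)] by blast
    obtain a where a: "a \<in> ?Z" "v1 = eclass a" using vs(1) unfolding GE_vertices_def by blast
    obtain b where b: "b \<in> ?Z" "v2 = eclass b" using vs(2) unfolding GE_vertices_def by blast
    obtain c where c: "c \<in> ?Z" "v3 = eclass c" using vs(3) unfolding GE_vertices_def by blast
    have ab: "ann a \<noteq> ann b" using vs(4) a b eclass_eq by blast
    have ac: "ann a \<noteq> ann c" using vs(5) a c eclass_eq by blast
    have bc: "ann b \<noteq> ann c" using vs(6) b c eclass_eq by blast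
    show False
    proof (cases "a * a = 0")
      case aa: True
      show ?thesis
      proof (cases "b * b = 0")
        case True then show ?thesis using C1[OF a(1) b(1) aa] ab by blast
      next
        case False
        then have "c * c = 0" using C2[OF b(1) c(1) a(1) False bc ab[symmetric] ac[symmetric]] by blast
        then show ?thesis using C1[OF a(1) c(1) aa] ac by blast
      qed
    next
      case False
      have "b * b = 0" using C2[OF a(1) b(1) c(1) False ab ac bc] .
      moreover have "c * c = 0" using C2[OF a(1) c(1) b(1) False ac ab bc[symmetric]] .
      ultimately show ?thesis using C1[OF b(1) c(1)] bc by blast
    qed
  qed
qed

end
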